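(* Let $s\in\mathbb N$, let $c_s>0$ be a constant, and for $m\in\mathbb N$ let $N_m=\sup\{N\in\mathbb N_0:|Q_N|\le c_sm2^m\}$. Under the complete random design, $$\Pr\Big(\sum_{\boldsymbol k\in Q_{N_m}}Z(\boldsymbol k)\ge2c_sm\Big)\le\frac1{c_sm}.$$
   Context: For $k\in\mathbb N_0$, $k=\sum_{\ell\ge1}a_\ell2^{\ell-1}$ with $a_\ell\in\{0,1\}$, let $\kappa=\{\ell:a_\ell=1\}$. For $\boldsymbol k\in\mathbb N_0^s$ with digit sets $\kappa_1,\dots,\kappa_s$, $\|\boldsymbol\kappa\|_1=\sum_j\sum_{\ell\in\kappa_j}\ell$; $Q_N=\{\boldsymbol k\in\mathbb N_0^s\setminus\{\boldsymbol0\}:\|\boldsymbol\kappa\|_1\le N\}$. Complete random design: random matrices $C_j\in\{0,1\}^{\infty\times m}$ ($j=1,\dots,s$) with all entries i.i.d. uniform on $\{0,1\}$; $Z(\boldsymbol k)=\mathbf 1\{\sum_j\sum_{\ell\in\kappa_j}C_j(\ell,:)=\boldsymbol0\bmod2\}$. *)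

theory Defs
  imports "HOL-Probability.Probability"
begin

text \<open>Digit set kappa of k = sum a_l 2^(l-1): positions l >= 1 with a_l = 1.\<close>
definition digit_set :: "nat \<Rightarrow> nat set" where
  "digit_set k = {l. 1 \<le> l \<and> bit k (l - 1)}"

text \<open>Vectors k in N_0^s are functions nat => nat vanishing outside {0..<s}
  (coordinate j = 1..s of the paper is index j-1 here).\<close>
definition kappa_norm :: "nat \<Rightarrow> (nat \<Rightarrow> nat) \<Rightarrow> nat" where
  "kappa_norm s k = (\<Sum>j<s. \<Sum>l\<in>digit_set (k j). l)"

definition QN :: "nat \<Rightarrow> nat \<Rightarrow> (nat \<Rightarrow> nat) set" where
  "QN s N = {k. (\<forall>j\<ge>s. k j = 0) \<and> k \<noteq> (\<lambda>_. 0) \<and> kappa_norm s k \<le> N}"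

definition Nm :: "nat \<Rightarrow> real \<Rightarrow> nat \<Rightarrow> nat" where
  "Nm s c m = Sup {N. real (card (QN s N)) \<le> c * real m * 2 ^ m}"

text \<open>Complete random design: entry (j, l, col) is C_j(l, col); all entries
  i.i.d. uniform on {0,1} (True = 1).  Unused indices are extra independent coins.\<close>
definition random_design :: "(nat \<times> nat \<times> nat \<Rightarrow> bool) measure" where
  "random_design = PiM UNIV (\<lambda>_. measure_pmf (bernoulli_pmf (1/2)))"

definition Zind :: "nat \<Rightarrow> nat \<Rightarrow> (nat \<Rightarrow> nat) \<Rightarrow> (nat \<times> nat \<times> nat \<Rightarrow> bool) \<Rightarrow> bool" where
  "Zind s m k C = (\<forall>col<m. even (\<Sum>j<s. \<Sum>l\<in>digit_set (k j). of_bool (C (j, l, col)) :: nat))"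

end

theory Submission
  imports Defs
begin

abbreviation "BB \<equiv> measure_pmf (bernoulli_pmf (1/2))"

lemma pps: "product_prob_space (\<lambda>_::nat\<times>nat\<times>nat. BB)"
  by (intro product_prob_spaceI) (simp add: measure_pmf.prob_space_axioms)

lemma ps: "prob_space random_design"
proof -
  interpret product_prob_space "\<lambda>_::nat\<times>nat\<times>nat. BB" UNIV by (rule pps)
  show ?thesis unfolding random_design_def by (rule P.prob_space_axioms)
qed

definition psi :: "bool \<Rightarrow> real" where "psi b = (if b then -1 else 1)"
definition chi :: "(nat\<times>nat\<times>nat) set \<Rightarrow> (nat\<times>nat\<times>nat \<Rightarrow> bool) \<Rightarrow> real" where
  "chi A C = (\<Prod>x\<in>A. psi (C x))"

lemma chi_meas: "chi A \<in> borel_measurable random_design"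
  unfolding chi_def random_design_def
  by measurable

lemma chi_bound: "\<bar>chi A C\<bar> \<le> 1"
  unfolding chi_def psi_def by (simp add: abs_prod prod_le_1)

lemma chi_int: "integrable random_design (chi A)"
  using prob_space.finite_measure[OF ps] chi_meas chi_bound
  by (intro finite_measure.integrable_const_bound[where B=1]) auto

lemma chi_exp: assumes "finite A"
  shows "integral\<^sup>L random_design (chi A) = (if A = {} then 1 else 0)"
proof -
  have d: "distr random_design (PiM A (\<lambda>_. BB)) (\<lambda>x. restrict x A) = PiM A (\<lambda>_. BB)"
    unfolding random_design_def
    by (rule product_prob_space.distr_PiM_restrict_finite[OF pps assms]) simp
  have "integral\<^sup>L random_design (chi A) = integral\<^sup>L random_design (\<lambda>x. (\<lambda>y. \<Prod>i\<in>A. psi (y i)) (restrict x A))"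
    unfolding chi_def by (intro Bochner_Integration.integral_cong) auto
  also have "\<dots> = integral\<^sup>L (distr random_design (PiM A (\<lambda>_. BB)) (\<lambda>x. restrict x A)) (\<lambda>y. \<Prod>i\<in>A. psi (y i))"
    unfolding random_design_def by (rule integral_distr[symmetric, OF measurable_restrict_subset]) (simp, measurable)
  also have "\<dots> = (\<Prod>i\<in>A. integral\<^sup>L BB psi)"
    unfolding d
    by (rule product_sigma_finite.product_integral_prod[OF _ assms])
       (auto intro: product_prob_space.axioms(1)[OF pps] intro!: integrable_measure_pmf_finite)
  also have "\<dots> = (if A = {} then 1 else 0)"
    using assms by (simp add: psi_def card_gt_0_iff)
  finally show ?thesis .
qed

lemma bit_le: "bit (k::nat) n \<Longrightarrow> 2^n \<le> k"
proof (rule ccontr)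
  assume "bit k n" "\<not> 2^n \<le> k"
  then have "k div 2^n = 0" by simp
  with \<open>bit k n\<close> show False by (simp add: bit_iff_odd)
qed

lemma digit_set_sub: "digit_set k \<subseteq> {1..k}"
proof
  fix l assume "l \<in> digit_set k"
  then have l: "1 \<le> l" "bit k (l-1)" by (auto simp: digit_set_def)
  have "l - 1 < 2^(l-1)" by (rule less_exp)
  also have "\<dots> \<le> k" using bit_le[OF l(2)] .
  finally show "l \<in> {1..k}" using l by auto
qed

lemma finite_digit_set[simp]: "finite (digit_set k)"
  using digit_set_sub finite_subset by blast

lemma Suc_digit_set: "Suc n \<in> digit_set k \<longleftrightarrow> bit k n"
  by (simp add: digit_set_def)

lemma digit_set_inj: "digit_set a = digit_set b \<Longrightarrow> a = b"
  by (metis Suc_digit_set bit_eq_iff)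

definition Rs :: "nat \<Rightarrow> (nat \<Rightarrow> nat) \<Rightarrow> (nat \<times> nat) set" where
  "Rs s k = Sigma {..<s} (\<lambda>j. digit_set (k j))"

definition Aset :: "nat \<Rightarrow> (nat \<Rightarrow> nat) \<Rightarrow> nat set \<Rightarrow> (nat\<times>nat\<times>nat) set" where
  "Aset s k T = (\<lambda>((j,l),col). (j,l,col)) ` (Rs s k \<times> T)"

lemma finite_Rs[simp]: "finite (Rs s k)"
  unfolding Rs_def by auto

lemma finite_Aset[simp]: "finite T \<Longrightarrow> finite (Aset s k T)"
  unfolding Aset_def by auto

lemma chi_Aset: "finite T \<Longrightarrow> chi (Aset s k T) C = (\<Prod>col\<in>T. \<Prod>(j,l)\<in>Rs s k. psi (C (j,l,col)))"
proof -
  assume T: "finite T"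
  have inj: "inj_on (\<lambda>((j,l),col). (j,l,col)) (Rs s k \<times> T)"
    by (auto simp: inj_on_def)
  have "chi (Aset s k T) C = (\<Prod>x\<in>Rs s k \<times> T. psi (C ((\<lambda>((j,l),col). (j,l,col)) x)))"
    unfolding chi_def Aset_def by (subst prod.reindex[OF inj]) (simp add: comp_def)
  also have "\<dots> = (\<Prod>jl\<in>Rs s k. \<Prod>col\<in>T. psi (C (fst jl, snd jl, col)))"
    unfolding prod.cartesian_product by (rule prod.cong[OF refl]) (auto simp: case_prod_beta)
  also have "\<dots> = (\<Prod>col\<in>T. \<Prod>jl\<in>Rs s k. psi (C (fst jl, snd jl, col)))"
    by (rule prod.swap)
  also have "\<dots> = (\<Prod>col\<in>T. \<Prod>(j,l)\<in>Rs s k. psi (C (j,l,col)))"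
    by (intro prod.cong refl) (auto simp: case_prod_beta)
  finally show ?thesis .
qed

lemma psi_pow: "psi b = (-1) ^ (of_bool b :: nat)"
  by (cases b) (auto simp: psi_def)

lemma parity_prod: "((-1::real) ^ (\<Sum>j<s. \<Sum>l\<in>digit_set (k j). of_bool (C (j, l, col)) :: nat))
   = (\<Prod>(j,l)\<in>Rs s k. psi (C (j,l,col)))"
  unfolding Rs_def power_sum psi_pow
  by (subst prod.Sigma) auto

lemma of_bool_all: "(of_bool (\<forall>col<(m::nat). P col) :: real) = (\<Prod>col<m. of_bool (P col))"
  by (induction m) (auto simp: lessThan_Suc less_Suc_eq)

lemma of_bool_even: "(of_bool (even n) :: real) = (1 + (-1)^n) / 2"
  by (auto simp: minus_one_power_iff)

lemma Zind_chi: "(of_bool (Zind s m k C) :: real) = (1/2)^m * (\<Sum>T\<in>Pow {..<m}. chi (Aset s k T) C)"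
proof -
  define g where "g col = (\<Prod>(j,l)\<in>Rs s k. psi (C (j,l,col)))" for col
  have "(of_bool (Zind s m k C) :: real) = (\<Prod>col<m. (1 + g col) / 2)"
    unfolding Zind_def of_bool_all of_bool_even parity_prod g_def ..
  also have "\<dots> = (1/2)^m * (\<Prod>col<m. g col + 1)"
    by (simp add: prod_dividef add.commute power_one_over)
  also have "(\<Prod>col<m. g col + 1) = (\<Sum>T\<in>Pow {..<m}. (\<Prod>col\<in>T. g col))"
    by (subst prod_add) auto
  also have "\<dots> = (\<Sum>T\<in>Pow {..<m}. chi (Aset s k T) C)"
    by (intro sum.cong refl) (auto simp: chi_Aset g_def finite_subset)
  finally show ?thesis .
qed

lemma psi_sq: "psi b * psi b = 1"
  by (simp add: psi_def)

lemma chi_mult: assumes "finite A" "finite B"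
  shows "chi A C * chi B C = chi ((A - B) \<union> (B - A)) C"
proof -
  have a: "chi A C = chi (A - B) C * chi (A \<inter> B) C"
    unfolding chi_def using assms by (subst prod.union_disjoint[symmetric]) (simp_all add: Un_Diff_Int, blast)
  have b1: "chi B C = (\<Prod>x\<in>(B - A) \<union> (A \<inter> B). psi (C x))"
    unfolding chi_def by (rule prod.cong) auto
  have b: "chi B C = chi (B - A) C * chi (A \<inter> B) C"
    unfolding b1 unfolding chi_def using assms by (intro prod.union_disjoint) auto
  have c: "chi (A \<inter> B) C * chi (A \<inter> B) C = 1"
    unfolding chi_def prod.distrib[symmetric] psi_sq by simp
  have d: "chi ((A - B) \<union> (B - A)) C = chi (A - B) C * chi (B - A) C"
    unfolding chi_def using assms by (subst prod.union_disjoint) auto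
  have "chi A C * chi B C = (chi (A - B) C * chi (B - A) C) * (chi (A \<inter> B) C * chi (A \<inter> B) C)"
    unfolding a b by (simp only: ac_simps)
  then show ?thesis using c d by simp
qed

lemma le_kappa: assumes "j < s" "l \<in> digit_set (k j)" shows "l \<le> kappa_norm s k"
proof -
  have "l \<le> (\<Sum>l\<in>digit_set (k j). l)" using assms by (intro member_le_sum) auto
  also have "\<dots> \<le> kappa_norm s k" unfolding kappa_norm_def
    using assms by (intro member_le_sum[where f="\<lambda>j. \<Sum>l\<in>digit_set (k j). l"]) auto
  finally show ?thesis .
qed

lemma Rs_ne: assumes "k \<in> QN s N" shows "Rs s k \<noteq> {}"
proof -
  from assms have k0: "k \<noteq> (\<lambda>_. 0)" and out: "\<forall>j\<ge>s. k j = 0" by (auto simp: QN_def)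
  then obtain j where j: "k j \<noteq> 0" by auto
  with out have js: "j < s" by (meson not_le)
  have "\<exists>n. bit (k j) n"
  proof (rule ccontr)
    assume "\<not> (\<exists>n. bit (k j) n)"
    then have "k j = 0" by (subst bit_eq_iff) simp
    with j show False by simp
  qed
  then obtain n where "bit (k j) n" by blast
  then have "(j, Suc n) \<in> Rs s k" using js by (simp add: Rs_def Suc_digit_set)
  then show ?thesis by auto
qed

lemma Rs_inj: assumes "k \<in> QN s N" "k' \<in> QN s N'" "Rs s k = Rs s k'" shows "k = k'"
proof
  fix j
  show "k j = k' j"
  proof (cases "j < s")
    case True
    have "digit_set (k j) = digit_set (k' j)"
    proof -
      have "digit_set (k j) = {l. (j,l) \<in> Rs s k}" using True by (auto simp: Rs_def)
      also have "\<dots> = {l. (j,l) \<in> Rs s k'}" using assms(3) by simp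
      also have "\<dots> = digit_set (k' j)" using True by (auto simp: Rs_def)
      finally show ?thesis .
    qed
    then show ?thesis by (rule digit_set_inj)
  next
    case False
    then show ?thesis using assms(1,2) by (auto simp: QN_def)
  qed
qed

lemma memA: "(j,l,c) \<in> Aset s k T \<longleftrightarrow> (j,l) \<in> Rs s k \<and> c \<in> T"
  unfolding Aset_def by force

lemma Aset_empty: "Aset s k T = {} \<longleftrightarrow> Rs s k = {} \<or> T = {}"
  unfolding Aset_def by auto

lemma Aset_eq: assumes "Rs s k \<noteq> {}" "T \<noteq> {}" "Aset s k T = Aset s k' T'"
  shows "T' = T \<and> Rs s k' = Rs s k"
proof -
  from assms(1) obtain j0 l0 where jl0: "(j0,l0) \<in> Rs s k" by auto
  from assms(2) obtain c0 where c0: "c0 \<in> T" by auto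
  have "(j0,l0,c0) \<in> Aset s k' T'" using assms(3) memA jl0 c0 by metis
  then have jl0': "(j0,l0) \<in> Rs s k'" and c0': "c0 \<in> T'" by (auto simp: memA)
  have "T' = T"
  proof
    show "T' \<subseteq> T"
    proof
      fix c assume "c \<in> T'"
      then have "(j0,l0,c) \<in> Aset s k' T'" using jl0' memA by metis
      then show "c \<in> T" using assms(3) memA by metis
    qed
    show "T \<subseteq> T'"
    proof
      fix c assume "c \<in> T"
      then have "(j0,l0,c) \<in> Aset s k T" using jl0 memA by metis
      then show "c \<in> T'" using assms(3) memA by metis
    qed
  qed
  moreover have "Rs s k' = Rs s k"
  proof (intro set_eqI iffI)
    fix x assume "x \<in> Rs s k'"
    then obtain j l where x: "x = (j,l)" "(j,l) \<in> Rs s k'" by (cases x) auto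
    then have "(j,l,c0) \<in> Aset s k' T'" using c0' memA by metis
    then show "x \<in> Rs s k" using assms(3) memA x by metis
  next
    fix x assume "x \<in> Rs s k"
    then obtain j l where x: "x = (j,l)" "(j,l) \<in> Rs s k" by (cases x) auto
    then have "(j,l,c0) \<in> Aset s k T" using c0 memA by metis
    then show "x \<in> Rs s k'" using assms(3) memA x by metis
  qed
  ultimately show ?thesis by simp
qed

declare chi_meas[measurable]

lemma Z_eq: "(\<lambda>C. of_bool (Zind s m k C) :: real) = (\<lambda>C. (1/2)^m * (\<Sum>T\<in>Pow {..<m}. chi (Aset s k T) C))"
  by (simp add: Zind_chi)

lemma Z_meas[measurable]: "(\<lambda>C. of_bool (Zind s m k C) :: real) \<in> borel_measurable random_design"
  unfolding Z_eq by measurable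

lemma int_bound: assumes "f \<in> borel_measurable random_design" "\<And>C. \<bar>f C\<bar> \<le> (B::real)"
  shows "integrable random_design f"
  using prob_space.finite_measure[OF ps] assms
  by (intro finite_measure.integrable_const_bound[where B=B]) auto

lemma EZ: assumes "k \<in> QN s N"
  shows "integral\<^sup>L random_design (\<lambda>C. of_bool (Zind s m k C) :: real) = (1/2)^m"
proof -
  have "integral\<^sup>L random_design (\<lambda>C. of_bool (Zind s m k C) :: real)
     = (1/2)^m * (\<Sum>T\<in>Pow {..<m}. integral\<^sup>L random_design (chi (Aset s k T)))"
    unfolding Z_eq by (simp add: chi_int)
  also have "(\<Sum>T\<in>Pow {..<m}. integral\<^sup>L random_design (chi (Aset s k T)))
     = (\<Sum>T\<in>Pow {..<m}. if T = {} then 1 else 0)"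
    using Rs_ne[OF assms]
    by (intro sum.cong refl) (auto simp: chi_exp Aset_empty finite_subset)
  also have "\<dots> = 1" by (simp add: sum.delta)
  finally show ?thesis by simp
qed

lemma EZZ: assumes "k \<in> QN s N" "k' \<in> QN s N" "k \<noteq> k'"
  shows "integral\<^sup>L random_design (\<lambda>C. of_bool (Zind s m k C) * of_bool (Zind s m k' C) :: real) = (1/4)^m"
proof -
  have eq: "(\<lambda>C. of_bool (Zind s m k C) * of_bool (Zind s m k' C) :: real)
     = (\<lambda>C. (1/4)^m * (\<Sum>T\<in>Pow {..<m}. \<Sum>T'\<in>Pow {..<m}. chi ((Aset s k T - Aset s k' T') \<union> (Aset s k' T' - Aset s k T)) C))"
  proof
    fix C
    have "(of_bool (Zind s m k C) * of_bool (Zind s m k' C) :: real)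
       = ((1/2)^m * (1/2)^m) * ((\<Sum>T\<in>Pow {..<m}. chi (Aset s k T) C) * (\<Sum>T'\<in>Pow {..<m}. chi (Aset s k' T') C))"
      unfolding Zind_chi by (simp only: ac_simps)
    also have "\<dots> = (1/4)^m * (\<Sum>T\<in>Pow {..<m}. \<Sum>T'\<in>Pow {..<m}. chi (Aset s k T) C * chi (Aset s k' T') C)"
      by (simp add: sum_product power_mult_distrib[symmetric])
    also have "\<dots> = (1/4)^m * (\<Sum>T\<in>Pow {..<m}. \<Sum>T'\<in>Pow {..<m}. chi ((Aset s k T - Aset s k' T') \<union> (Aset s k' T' - Aset s k T)) C)"
      by (intro arg_cong[where f="\<lambda>x. (1/4)^m * x"] sum.cong refl chi_mult) (auto simp: finite_Aset dest: rev_finite_subset[OF finite_lessThan])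
    finally show "(of_bool (Zind s m k C) * of_bool (Zind s m k' C) :: real) = (1/4)^m * (\<Sum>T\<in>Pow {..<m}. \<Sum>T'\<in>Pow {..<m}. chi ((Aset s k T - Aset s k' T') \<union> (Aset s k' T' - Aset s k T)) C)" .
  qed
  have key: "((Aset s k T - Aset s k' T') \<union> (Aset s k' T' - Aset s k T) = {}) \<longleftrightarrow> (T = {} \<and> T' = {})" for T T'
  proof
    assume h: "(Aset s k T - Aset s k' T') \<union> (Aset s k' T' - Aset s k T) = {}"
    then have e: "Aset s k T = Aset s k' T'" by blast
    show "T = {} \<and> T' = {}"
    proof (cases "T = {}")
      case True
      then have "Aset s k T = {}" by (simp add: Aset_empty)
      then have "Aset s k' T' = {}" using e by simp
      then show ?thesis using True Rs_ne[OF assms(2)] by (simp add: Aset_empty)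
    next
      case False
      from Aset_eq[OF Rs_ne[OF assms(1)] False e] have "Rs s k' = Rs s k" by simp
      then have "k' = k" using Rs_inj assms by metis
      then show ?thesis using assms(3) by simp
    qed
  qed (simp add: Aset_def)
  have "integral\<^sup>L random_design (\<lambda>C. of_bool (Zind s m k C) * of_bool (Zind s m k' C) :: real)
     = (1/4)^m * (\<Sum>T\<in>Pow {..<m}. \<Sum>T'\<in>Pow {..<m}. integral\<^sup>L random_design (chi ((Aset s k T - Aset s k' T') \<union> (Aset s k' T' - Aset s k T))))"
    unfolding eq by (simp add: chi_int)
  also have "(\<Sum>T\<in>Pow {..<m}. \<Sum>T'\<in>Pow {..<m}. integral\<^sup>L random_design (chi ((Aset s k T - Aset s k' T') \<union> (Aset s k' T' - Aset s k T))))
     = (\<Sum>T\<in>Pow {..<m}. \<Sum>T'\<in>Pow {..<m}. if T = {} \<and> T' = {} then 1 else 0)"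
  proof (intro sum.cong refl)
    fix T T' assume "T \<in> Pow {..<m}" "T' \<in> Pow {..<m}"
    then have fin: "finite ((Aset s k T - Aset s k' T') \<union> (Aset s k' T' - Aset s k T))"
      by (auto simp: finite_Aset dest: rev_finite_subset[OF finite_lessThan])
    show "integral\<^sup>L random_design (chi ((Aset s k T - Aset s k' T') \<union> (Aset s k' T' - Aset s k T))) = (if T = {} \<and> T' = {} then 1 else 0)"
      by (simp only: chi_exp[OF fin] key)
  qed
  also have "\<dots> = (\<Sum>T\<in>Pow {..<m}. if T = {} then 1 else 0)"
    by (intro sum.cong refl) (simp add: sum.delta)
  also have "\<dots> = 1" by (simp add: sum.delta)
  finally show ?thesis by simp
qed

lemma QN_finite: "finite (QN s N)"
proof -
  define f where "f k = (\<lambda>j. if j < s then digit_set (k j) else {})" for k :: "nat \<Rightarrow> nat"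
  have "f ` QN s N \<subseteq> PiE_dflt {..<s} {} (\<lambda>_. Pow {1..N})"
  proof
    fix y assume "y \<in> f ` QN s N"
    then obtain k where k: "k \<in> QN s N" "y = f k" by auto
    have "digit_set (k j) \<subseteq> {1..N}" if "j < s" for j
    proof
      fix l assume l: "l \<in> digit_set (k j)"
      then have "l \<le> kappa_norm s k" using le_kappa that by blast
      also have "\<dots> \<le> N" using k by (simp add: QN_def)
      finally show "l \<in> {1..N}" using l by (auto simp: digit_set_def)
    qed
    then show "y \<in> PiE_dflt {..<s} {} (\<lambda>_. Pow {1..N})"
      using k by (auto simp: PiE_dflt_def f_def)
  qed
  then have "finite (f ` QN s N)" by (rule finite_subset) auto
  moreover have "inj_on f (QN s N)"
  proof (rule inj_onI)
    fix k k' assume kk: "k \<in> QN s N" "k' \<in> QN s N" "f k = f k'"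
    show "k = k'"
    proof
      fix j show "k j = k' j"
      proof (cases "j < s")
        case True
        then have "digit_set (k j) = digit_set (k' j)" using fun_cong[OF kk(3), of j] by (simp add: f_def)
        then show ?thesis by (rule digit_set_inj)
      next
        case False then show ?thesis using kk by (auto simp: QN_def)
      qed
    qed
  qed
  ultimately show ?thesis by (rule finite_imageD)
qed

lemma digit_set_pow: "digit_set (2^i) = {Suc i}"
  by (auto simp: digit_set_def bit_exp_iff)

lemma digit_set_0[simp]: "digit_set 0 = {}"
  by (simp add: digit_set_def)

lemma QN_card_ge: assumes "1 \<le> s" shows "N \<le> card (QN s N)"
proof -
  define e where "e i = (\<lambda>j::nat. if j = 0 then (2::nat)^i else 0)" for i
  have "e ` {..<N} \<subseteq> QN s N"
  proof
    fix y assume "y \<in> e ` {..<N}"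
    then obtain i where i: "i < N" "y = e i" by auto
    have "kappa_norm s (e i) = (\<Sum>j<s. if j = 0 then Suc i else 0)"
      unfolding kappa_norm_def e_def by (intro sum.cong refl) (auto simp: digit_set_pow)
    also have "\<dots> = Suc i" using assms by (simp add: sum.delta)
    finally have "kappa_norm s (e i) \<le> N" using i by simp
    moreover have "e i \<noteq> (\<lambda>_. 0)"
    proof
      assume "e i = (\<lambda>_. 0)"
      then have "e i 0 = 0" by simp
      then show False by (simp add: e_def)
    qed
    moreover have "\<forall>j\<ge>s. e i j = 0" using assms by (auto simp: e_def)
    ultimately show "y \<in> QN s N" using i by (simp add: QN_def)
  qed
  moreover have "inj_on e {..<N}"
  proof (rule inj_onI)
    fix a b assume "e a = e b"
    then have "e a 0 = e b 0" by simp
    then have "(2::nat)^a = 2^b" by (simp add: e_def)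
    then show "a = b" by simp
  qed
  ultimately have "card (e ` {..<N}) \<le> card (QN s N)"
    using QN_finite by (intro card_mono) auto
  then show ?thesis using \<open>inj_on e {..<N}\<close> by (simp add: card_image)
qed

lemma QN_0: "QN s 0 = {}"
proof (rule ccontr)
  assume "QN s 0 \<noteq> {}"
  then obtain k where k: "k \<in> QN s 0" by auto
  from Rs_ne[OF k] obtain j l where "(j,l) \<in> Rs s k" by auto
  then have "j < s" "l \<in> digit_set (k j)" by (auto simp: Rs_def)
  then have "l \<le> kappa_norm s k" "1 \<le> l" by (auto intro: le_kappa simp: digit_set_def)
  with k show False by (simp add: QN_def)
qed

lemma Nm_prop: assumes "1 \<le> s" "0 < c"
  shows "real (card (QN s (Nm s c m))) \<le> c * real m * 2 ^ m"
proof -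
  define S where "S = {N. real (card (QN s N)) \<le> c * real m * 2 ^ m}"
  have "0 \<in> S" using assms by (simp add: S_def QN_0)
  moreover have "S \<subseteq> {..nat \<lceil>c * real m * 2 ^ m\<rceil>}"
  proof
    fix N assume "N \<in> S"
    moreover have "real N \<le> real (card (QN s N))"
      using QN_card_ge[OF assms(1), of N] by simp
    ultimately have "real N \<le> c * real m * 2 ^ m" unfolding S_def by simp
    then have "N \<le> nat \<lceil>c * real m * 2 ^ m\<rceil>" by linarith
    then show "N \<in> {..nat \<lceil>c * real m * 2 ^ m\<rceil>}" by simp
  qed
  then have "finite S" by (rule finite_subset) auto
  ultimately have "Sup S \<in> S" by (auto simp: Sup_nat_def)
  then show ?thesis unfolding Nm_def S_def[symmetric] by (simp add: S_def)
qed

theorem lemma4: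
  fixes s m :: nat and c :: real
  assumes "1 \<le> s" and "0 < c" and "1 \<le> m"
  shows "measure random_design
           {C \<in> space random_design.
              2 * c * real m \<le> real (\<Sum>k\<in>QN s (Nm s c m). of_bool (Zind s m k C))}
         \<le> 1 / (c * real m)"
proof -
  interpret P: prob_space random_design by (rule ps)
  define K where "K = QN s (Nm s c m)"
  define Z where "Z k C = (of_bool (Zind s m k C) :: real)" for k C
  define X where "X C = (\<Sum>k\<in>K. Z k C)" for C
  define a :: real where "a = (1/2)^m"
  have fin: "finite K" unfolding K_def by (rule QN_finite)
  have Kb: "real (card K) \<le> c * real m * 2 ^ m" unfolding K_def by (rule Nm_prop[OF assms(1,2)])
  have cm: "0 < c * real m" using assms by simp
  have Zmeas[measurable]: "Z k \<in> borel_measurable random_design" for k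
    unfolding Z_def[abs_def] by measurable
  have Xmeas[measurable]: "X \<in> borel_measurable random_design"
    unfolding X_def[abs_def] by measurable
  have Xeq: "real (\<Sum>k\<in>K. of_bool (Zind s m k C)) = X C" for C
    unfolding X_def Z_def by simp
  have Z01: "0 \<le> Z k C" "Z k C \<le> 1" for k C unfolding Z_def by auto
  have Xb: "\<bar>X C\<bar> \<le> real (card K)" for C
  proof -
    have "0 \<le> X C" unfolding X_def using Z01 by (simp add: sum_nonneg)
    moreover have "X C \<le> (\<Sum>k\<in>K. 1)" unfolding X_def using Z01 by (intro sum_mono) auto
    ultimately show ?thesis by simp
  qed
  have Xint: "integrable random_design X"
    by (rule int_bound[OF Xmeas Xb])
  have X2int: "integrable random_design (\<lambda>C. X C ^ 2)"
  proof (rule int_bound)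
    fix C show "\<bar>X C ^ 2\<bar> \<le> real (card K) ^ 2"
      using power_mono[OF Xb[of C] abs_ge_zero, of 2] by simp
  qed measurable
  have ZZint: "integrable random_design (\<lambda>C. Z k C * Z k' C)" for k k'
  proof (rule int_bound)
    fix C show "\<bar>Z k C * Z k' C\<bar> \<le> 1" unfolding Z_def by auto
  qed measurable
  have EX: "P.expectation X = real (card K) * a"
  proof -
    have "P.expectation X = (\<Sum>k\<in>K. P.expectation (Z k))"
      unfolding X_def[abs_def] by (rule Bochner_Integration.integral_sum)
        (auto intro: int_bound[OF Zmeas, of _ 1] simp: Z01 abs_le_iff order_trans[OF _ Z01(1)])
    also have "\<dots> = (\<Sum>k\<in>K. a)"
      by (intro sum.cong refl) (auto simp: Z_def[abs_def] a_def K_def EZ)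
    finally show ?thesis by simp
  qed
  have EZZ': "P.expectation (\<lambda>C. Z k C * Z k' C) = (if k = k' then a else a^2)"
    if "k \<in> K" "k' \<in> K" for k k'
  proof (cases "k = k'")
    case True
    have "P.expectation (\<lambda>C. Z k C * Z k' C) = P.expectation (Z k)"
      using True by (intro Bochner_Integration.integral_cong) (auto simp: Z_def)
    then show ?thesis using True that by (simp add: Z_def[abs_def] a_def K_def EZ)
  next
    case False
    have q: "((1::real)/2)^m * (1/2)^m = (1/4)^m"
      by (simp add: power_mult_distrib[symmetric])
    show ?thesis using False that EZZ[of k s "Nm s c m" k' m]
      by (simp add: Z_def a_def K_def power2_eq_square q)
  qed
  have EX2: "P.expectation (\<lambda>C. X C ^ 2) = real (card K) * (real (card K) * a^2 + (a - a^2))"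
  proof -
    have "P.expectation (\<lambda>C. X C ^ 2) = P.expectation (\<lambda>C. \<Sum>k\<in>K. \<Sum>k'\<in>K. Z k C * Z k' C)"
      unfolding X_def power2_eq_square sum_product ..
    also have "\<dots> = (\<Sum>k\<in>K. \<Sum>k'\<in>K. P.expectation (\<lambda>C. Z k C * Z k' C))"
      using ZZint by (simp add: Bochner_Integration.integral_sum Bochner_Integration.integrable_sum)
    also have "\<dots> = (\<Sum>k\<in>K. \<Sum>k'\<in>K. a^2 + (if k = k' then a - a^2 else 0))"
      by (intro sum.cong refl) (simp add: EZZ')
    also have "\<dots> = (\<Sum>k\<in>K. real (card K) * a^2 + (a - a^2))"
      using fin by (intro sum.cong refl) (simp add: sum.distrib)
    finally show ?thesis by simp
  qed
  have var: "P.variance X \<le> c * real m"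
  proof -
    have "P.variance X = P.expectation (\<lambda>C. X C ^ 2) - (P.expectation X)^2"
      by (rule P.variance_eq[OF Xint X2int])
    also have "\<dots> = real (card K) * a - real (card K) * a^2"
      unfolding EX2 EX by (simp add: algebra_simps power2_eq_square)
    also have "\<dots> \<le> real (card K) * a"
      by (simp add: a_def)
    also have "\<dots> \<le> c * real m * 2 ^ m * a"
      using Kb by (intro mult_right_mono) (auto simp: a_def)
    also have "\<dots> = c * real m" by (simp add: a_def power_one_over)
    finally show ?thesis .
  qed
  have EXb: "P.expectation X \<le> c * real m"
  proof -
    have "P.expectation X \<le> c * real m * 2 ^ m * a"
      unfolding EX using Kb by (intro mult_right_mono) (auto simp: a_def)
    also have "\<dots> = c * real m" by (simp add: a_def power_one_over)
    finally show ?thesis .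
  qed
  have sub: "{C \<in> space random_design. 2 * c * real m \<le> real (\<Sum>k\<in>QN s (Nm s c m). of_bool (Zind s m k C))}
      \<subseteq> {C \<in> space random_design. c * real m \<le> \<bar>X C - P.expectation X\<bar>}"
    using EXb unfolding K_def[symmetric] Xeq by auto
  have "measure random_design {C \<in> space random_design. 2 * c * real m \<le> real (\<Sum>k\<in>QN s (Nm s c m). of_bool (Zind s m k C))}
      \<le> measure random_design {C \<in> space random_design. c * real m \<le> \<bar>X C - P.expectation X\<bar>}"
    by (rule P.finite_measure_mono[OF sub]) measurable
  also have "\<dots> \<le> P.variance X / (c * real m)^2"
    by (rule P.Chebyshev_inequality[OF Xmeas X2int cm])
  also have "\<dots> \<le> (c * real m) / (c * real m)^2"
    using var cm by (intro divide_right_mono) auto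
  also have "\<dots> = 1 / (c * real m)"
    using cm by (simp add: power2_eq_square)
  finally show ?thesis .
qed

end
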